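(* Let $\tau\colon\mathbb R^{\mathbb Z}\to\mathbb R^{\mathbb Z}$ be defined by $\tau(x)(n)=x(n+1)-x(n)^2$ for all $x\in\mathbb R^{\mathbb Z}$ and $n\in\mathbb Z$. Then $\tau$ is an algebraic cellular automaton over $\mathbb R$ (with memory set $\{0,1\}$ and local defining map $(x_0,x_1)\mapsto x_1-x_0^2$), its image $\tau(\mathbb R^{\mathbb Z})$ is dense in $\mathbb R^{\mathbb Z}$ for the prodiscrete topology, the constant configuration $z\equiv 1$ is not in $\tau(\mathbb R^{\mathbb Z})$, and hence $\tau(\mathbb R^{\mathbb Z})$ is not closed in $\mathbb R^{\mathbb Z}$ for the prodiscrete topology.
   Context: The prodiscrete topology on $\mathbb R^{\mathbb Z}$ is the product topology where each factor $\mathbb R$ is given the discrete topology. A cellular automaton over $\mathbb Z$ with alphabet $\mathbb R$ is a map $\tau$ for which there exist a finite $M\subset\mathbb Z$ and $\mu\colon\mathbb R^M\to\mathbb R$ with $\tau(x)(n)=\mu((m\mapsto x(n+m))_{m\in M})$; it is algebraic if $\mu$ is a polynomial map. *)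

theory Defs
  imports "HOL-Analysis.Analysis"
begin

text \<open>Polynomial maps R^M -> R (M a finite set of integers), represented as functions on
  int => real that only inspect the coordinates in M: the smallest class containing
  constants and coordinate projections (m in M), closed under sum and product.\<close>
inductive_set poly_map :: "int set \<Rightarrow> ((int \<Rightarrow> real) \<Rightarrow> real) set" for M :: "int set" where
  const: "(\<lambda>y. c) \<in> poly_map M"
| proj: "m \<in> M \<Longrightarrow> (\<lambda>y. y m) \<in> poly_map M"
| add: "p \<in> poly_map M \<Longrightarrow> q \<in> poly_map M \<Longrightarrow> (\<lambda>y. p y + q y) \<in> poly_map M"
| mult: "p \<in> poly_map M \<Longrightarrow> q \<in> poly_map M \<Longrightarrow> (\<lambda>y. p y * q y) \<in> poly_map M"

definition CA_with :: "int set \<Rightarrow> ((int \<Rightarrow> 'a) \<Rightarrow> 'a) \<Rightarrow> ((int \<Rightarrow> 'a) \<Rightarrow> (int \<Rightarrow> 'a)) \<Rightarrow> bool" where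
  "CA_with M \<mu> \<tau> \<longleftrightarrow> finite M \<and> (\<forall>x n. \<tau> x n = \<mu> (\<lambda>m\<in>M. x (n + m)))"

definition cellular_automaton :: "((int \<Rightarrow> 'a) \<Rightarrow> (int \<Rightarrow> 'a)) \<Rightarrow> bool" where
  "cellular_automaton \<tau> \<longleftrightarrow> (\<exists>M \<mu>. CA_with M \<mu> \<tau>)"

definition algebraic_CA :: "((int \<Rightarrow> real) \<Rightarrow> (int \<Rightarrow> real)) \<Rightarrow> bool" where
  "algebraic_CA \<tau> \<longleftrightarrow> (\<exists>M \<mu>. CA_with M \<mu> \<tau> \<and> \<mu> \<in> poly_map M)"

definition prodiscrete :: "(int \<Rightarrow> real) topology" where
  "prodiscrete = product_topology (\<lambda>_. discrete_topology UNIV) UNIV"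

end

theory Submission
  imports Defs
begin

lemma top_pd: "topspace prodiscrete = UNIV"
  unfolding prodiscrete_def by (simp add: topspace_product_topology PiE_def extensional_def)

lemma approx:
  fixes \<tau> :: "(int \<Rightarrow> real) \<Rightarrow> (int \<Rightarrow> real)"
  assumes tau_def: "\<And>x n. \<tau> x n = x (n + 1) - (x n)\<^sup>2"
  shows "\<exists>x. \<forall>n\<ge>-N. \<tau> x n = z n"
proof -
  define f where "f = rec_nat (0::real) (\<lambda>k r. z (int k - N) + r\<^sup>2)"
  have fS: "f (Suc k) = z (int k - N) + (f k)\<^sup>2" for k by (simp add: f_def)
  define x where "x n = f (nat (n + N))" for n
  have "\<tau> x n = z n" if "n \<ge> -N" for n
  proof -
    have "nat (n + 1 + N) = Suc (nat (n + N))" using that by simp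
    moreover have "int (nat (n + N)) - N = n" using that by simp
    ultimately show ?thesis by (simp add: tau_def x_def fS)
  qed
  thus ?thesis by blast
qed

lemma dense:
  fixes \<tau> :: "(int \<Rightarrow> real) \<Rightarrow> (int \<Rightarrow> real)"
  assumes tau_def: "\<And>x n. \<tau> x n = x (n + 1) - (x n)\<^sup>2"
  shows "prodiscrete closure_of (range \<tau>) = topspace prodiscrete"
proof -
  have "z \<in> prodiscrete closure_of (range \<tau>)" for z
  proof (subst in_closure_of, intro conjI allI impI)
    show "z \<in> topspace prodiscrete" by (simp add: top_pd)
  next
    fix T assume "z \<in> T \<and> openin prodiscrete T"
    then obtain U where U: "finite {i. U i \<noteq> UNIV}" "z \<in> PiE UNIV U" "PiE UNIV U \<subseteq> T"
      unfolding prodiscrete_def openin_product_topology_alt by auto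
    define F where "F = {i. U i \<noteq> UNIV}"
    have fin: "finite F" using U(1) F_def by simp
    define N where "N = (\<Sum>i\<in>F. \<bar>i\<bar>)"
    have bnd: "i \<in> F \<Longrightarrow> -N \<le> i" for i
    proof -
      assume "i \<in> F"
      hence "\<bar>i\<bar> \<le> N" unfolding N_def using fin by (intro member_le_sum) auto
      thus ?thesis by simp
    qed
    obtain x where x: "\<forall>n\<ge>-N. \<tau> x n = z n" using approx[OF tau_def] by blast
    have "\<tau> x \<in> PiE UNIV U"
    proof -
      have "\<tau> x i \<in> U i" for i
      proof (cases "i \<in> F")
        case True
        then show ?thesis using x bnd U(2) by (auto simp: PiE_def)
      next
        case False
        then show ?thesis by (simp add: F_def)
      qed
      thus ?thesis by (simp add: PiE_def extensional_def)
    qed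
    thus "\<exists>y. y \<in> range \<tau> \<and> y \<in> T" using U(3) by blast
  qed
  thus ?thesis by (auto simp: top_pd)
qed

lemma not_one:
  fixes \<tau> :: "(int \<Rightarrow> real) \<Rightarrow> (int \<Rightarrow> real)"
  assumes tau_def: "\<And>x n. \<tau> x n = x (n + 1) - (x n)\<^sup>2"
  shows "(\<lambda>_. 1) \<notin> range \<tau>"
proof
  assume "(\<lambda>_. 1) \<in> range \<tau>"
  then obtain x where "(\<lambda>_. 1) = \<tau> x" by auto
  hence rec: "x (n + 1) = 1 + (x n)\<^sup>2" for n using tau_def by (metis diff_eq_eq add.commute)
  have ge1: "x n \<ge> 1" for n using rec[of "n - 1"] by (simp add: add_increasing2)
  have step: "x (n + 1) \<ge> x n + 3/4" for n
  proof -
    have "(x n - 1/2)\<^sup>2 \<ge> 0" by simp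
    thus ?thesis using rec[of n] by (simp add: power2_eq_square algebra_simps)
  qed
  have ind: "x (m + int k) \<ge> x m + 3/4 * real k" for m k
  proof (induction k)
    case 0 then show ?case by simp
  next
    case (Suc k)
    have "x (m + int (Suc k)) = x ((m + int k) + 1)" by (simp add: algebra_simps)
    also have "\<dots> \<ge> x (m + int k) + 3/4" by (rule step)
    finally show ?case using Suc by (simp add: field_simps)
  qed
  obtain k :: nat where k: "real k > 4/3 * x 0" using reals_Archimedean2 by blast
  have "x 0 \<ge> x (- int k) + 3/4 * real k" using ind[of "- int k" k] by simp
  moreover have "x (- int k) \<ge> 1" by (rule ge1)
  ultimately show False using k by linarith
qed

theorem mainTheorem11:
  fixes \<tau> :: "(int \<Rightarrow> real) \<Rightarrow> (int \<Rightarrow> real)"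
  assumes tau_def: "\<And>x n. \<tau> x n = x (n + 1) - (x n)\<^sup>2"
  shows "cellular_automaton \<tau> \<and> algebraic_CA \<tau>
    \<and> CA_with {0, 1} (\<lambda>y. y 1 - (y 0)\<^sup>2) \<tau>
    \<and> (\<lambda>y. y 1 - (y 0)\<^sup>2) \<in> poly_map {0, 1}
    \<and> prodiscrete closure_of (range \<tau>) = topspace prodiscrete
    \<and> (\<lambda>_. 1) \<notin> range \<tau>
    \<and> \<not> closedin prodiscrete (range \<tau>)"
proof -
  have CA: "CA_with {0, 1} (\<lambda>y. y 1 - (y 0)\<^sup>2) \<tau>"
    unfolding CA_with_def by (simp add: tau_def add.commute)
  have P: "(\<lambda>y::int\<Rightarrow>real. y 1 - (y 0)\<^sup>2) \<in> poly_map {0, 1}"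
  proof -
    have "(\<lambda>y::int\<Rightarrow>real. y 1 + (\<lambda>y. -1) y * (y 0 * y 0)) \<in> poly_map {0, 1}"
      by (intro poly_map.add poly_map.mult poly_map.const poly_map.proj) auto
    moreover have "(\<lambda>y::int\<Rightarrow>real. y 1 + (\<lambda>y. -1) y * (y 0 * y 0)) = (\<lambda>y. y 1 - (y 0)\<^sup>2)"
      by (auto simp: power2_eq_square)
    ultimately show ?thesis by simp
  qed
  have D: "prodiscrete closure_of (range \<tau>) = topspace prodiscrete" by (rule dense[OF tau_def])
  have N1: "(\<lambda>_. 1) \<notin> range \<tau>" by (rule not_one[OF tau_def])
  have NC: "\<not> closedin prodiscrete (range \<tau>)"
  proof
    assume "closedin prodiscrete (range \<tau>)"
    hence "range \<tau> = UNIV" using D closure_of_eq top_pd by metis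
    thus False using N1 by simp
  qed
  show ?thesis using CA P D N1 NC unfolding cellular_automaton_def algebraic_CA_def by blast
qed

end
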